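(* Let $T$ be a string of length $n$ and $1\le i\le j<n$. For any interval $[s,t]$ with $i\le s<t\le j$, we have $[s,t]\in\mathsf{MUS}(T[i..j])$ and $[s,t]\notin\mathsf{MUS}(T[i..j+1])$ if and only if $T[s..t]=\mathit{sqs}_{i,j+1}$ (as strings) and $\#\mathit{occ}_{T[i..j+1]}(\mathit{sqs}_{i,j+1})=2$.
   Context: $T[a..b]$ denotes the substring of $T$ from position $a$ to $b$. For strings $S,w$, $\#\mathit{occ}_S(w)$ is the number of positions at which $w$ occurs in $S$, with $\#\mathit{occ}_S(\varepsilon)=|S|+1$. A substring $w$ of $S$ is unique in $S$ if $\#\mathit{occ}_S(w)=1$ and repeating if $\#\mathit{occ}_S(w)\ge 2$. For $1\le i\le j\le n$, $\mathsf{MUS}(T[i..j])$ is the set of intervals $[s,t]$ (positions in $T$) with $i\le s\le t\le j$ such that $T[s..t]$ is unique in $T[i..j]$ and every proper substring of $T[s..t]$ (including the empty string) is repeating in $T[i..j]$. $\mathit{sqs}_{i,j}$ is the shortest suffix of $T[i..j]$ that occurs at most twice in $T[i..j]$. *)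

theory Defs
  imports Main
begin

text \<open>Strings are lists; positions are 1-based. substr T a b is T[a..b].\<close>
definition substr :: "'a list \<Rightarrow> nat \<Rightarrow> nat \<Rightarrow> 'a list" where
  "substr T a b = take (Suc b - a) (drop (a - 1) T)"

text \<open>Number of occurrences of w in S (the empty string occurs length S + 1 times).\<close>
definition occ :: "'a list \<Rightarrow> 'a list \<Rightarrow> nat" where
  "occ S w = card {k. k + length w \<le> length S \<and> take (length w) (drop k S) = w}"

definition unique_in :: "'a list \<Rightarrow> 'a list \<Rightarrow> bool" where
  "unique_in S w \<longleftrightarrow> occ S w = 1"

definition repeating_in :: "'a list \<Rightarrow> 'a list \<Rightarrow> bool" where
  "repeating_in S w \<longleftrightarrow> occ S w \<ge> 2"

definition MUS :: "'a list \<Rightarrow> nat \<Rightarrow> nat \<Rightarrow> (nat \<times> nat) set" where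
  "MUS T i j = {(s, t). i \<le> s \<and> s \<le> t \<and> t \<le> j \<and>
      unique_in (substr T i j) (substr T s t) \<and>
      (\<forall>x w y. substr T s t = x @ w @ y \<and> length w < length (substr T s t)
          \<longrightarrow> repeating_in (substr T i j) w)}"

definition sqs :: "'a list \<Rightarrow> 'a list" where
  "sqs S = drop (length S - (LEAST l. l \<le> length S \<and> occ S (drop (length S - l) S) \<le> 2)) S"

end

theory Submission
  imports Defs
begin

definition occs :: "'a list \<Rightarrow> 'a list \<Rightarrow> nat set" where
  "occs S w = {k. k + length w \<le> length S \<and> take (length w) (drop k S) = w}"

lemma occ_occs: "occ S w = card (occs S w)"
  by (simp add: occ_def occs_def)

lemma occs_finite: "finite (occs S w)"
  by (rule finite_subset[of _ "{..length S}"]) (auto simp: occs_def)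

lemma occ_sub: "occ S (x @ v @ y) \<le> occ S v"
proof -
  have "card (occs S (x @ v @ y)) \<le> card (occs S v)"
  proof (rule card_inj_on_le[where f = "\<lambda>k. k + length x"])
    show "inj_on (\<lambda>k. k + length x) (occs S (x @ v @ y))" by (auto simp: inj_on_def)
    show "finite (occs S v)" by (rule occs_finite)
    show "(\<lambda>k. k + length x) ` occs S (x @ v @ y) \<subseteq> occs S v"
    proof
      fix z assume "z \<in> (\<lambda>k. k + length x) ` occs S (x @ v @ y)"
      then obtain k where z: "z = k + length x" and k: "k \<in> occs S (x @ v @ y)" by blast
      let ?L = "drop k S"
      have 1: "take (length x + length v + length y) ?L = x @ v @ y" and
           2: "k + length x + length v + length y \<le> length S"
        using k by (auto simp: occs_def add.assoc)
      have "take (length x + length v) ?L = x @ v"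
        using arg_cong[OF 1, of "take (length x + length v)"] by (simp add: min_def)
      hence "drop (length x) (take (length x + length v) ?L) = v" by simp
      hence "take (length v) (drop (length x) ?L) = v" by (simp add: drop_take)
      thus "z \<in> occs S v" using 2 by (simp add: occs_def z add.commute add.left_commute)
    qed
  qed
  thus ?thesis by (simp add: occ_occs)
qed

definition is_suf :: "'a list \<Rightarrow> 'a list \<Rightarrow> bool" where
  "is_suf S w \<longleftrightarrow> length w \<le> length S \<and> drop (length S - length w) S = w"

lemma occs_snoc: "occs (S @ [c]) w = occs S w \<union> (if is_suf (S @ [c]) w then {Suc (length S) - length w} else {})"
proof -
  have A: "take (length w) (drop k (S @ [c])) = take (length w) (drop k S)" if "k + length w \<le> length S" for k
    using that by simp
  show ?thesis
  proof (intro set_eqI iffI)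
    fix k assume k: "k \<in> occs (S @ [c]) w"
    show "k \<in> occs S w \<union> (if is_suf (S @ [c]) w then {Suc (length S) - length w} else {})"
    proof (cases "k + length w \<le> length S")
      case True thus ?thesis using k A[OF True] by (auto simp: occs_def)
    next
      case False
      hence kk: "k + length w = Suc (length S)" using k by (auto simp: occs_def)
      have t: "take (length w) (drop k (S @ [c])) = w" using k by (simp add: occs_def)
      have "length (drop k (S @ [c])) = length w" using kk by simp
      hence "drop k (S @ [c]) = w" using t by simp
      moreover have "k = length (S @ [c]) - length w" using kk by simp
      ultimately have "is_suf (S @ [c]) w" using kk by (simp add: is_suf_def)
      moreover have "k = Suc (length S) - length w" using kk by linarith
      ultimately show ?thesis by simp
    qed
  next
    fix k assume "k \<in> occs S w \<union> (if is_suf (S @ [c]) w then {Suc (length S) - length w} else {})"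
    thus "k \<in> occs (S @ [c]) w"
      by (auto simp: occs_def is_suf_def split: if_splits)
  qed
qed

lemma occ_snoc: "occ (S @ [c]) w = occ S w + (if is_suf (S @ [c]) w then 1 else 0)"
proof -
  have "Suc (length S) - length w \<notin> occs S w" if "is_suf (S @ [c]) w"
    using that by (auto simp: occs_def is_suf_def)
  thus ?thesis by (simp add: occ_occs occs_snoc occs_finite)
qed

lemma occ_snoc_butlast: "occ (S @ [c]) (w @ [a]) \<le> occ S w"
proof -
  have "card (occs (S @ [c]) (w @ [a])) \<le> card (occs S w)"
  proof (rule card_mono)
    show "finite (occs S w)" by (rule occs_finite)
    show "occs (S @ [c]) (w @ [a]) \<subseteq> occs S w"
    proof
      fix k assume k: "k \<in> occs (S @ [c]) (w @ [a])"
      hence le: "k + length w \<le> length S" and eq: "take (Suc (length w)) (drop k (S @ [c])) = w @ [a]"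
        by (auto simp: occs_def)
      have tk: "\<And>n L. take n (take (Suc n) L) = take n L" by simp
      have "take (length w) (drop k (S @ [c])) = take (length w) (take (Suc (length w)) (drop k (S @ [c])))"
        by (rule tk[symmetric])
      also have "\<dots> = take (length w) (w @ [a])" by (simp only: eq)
      finally have "take (length w) (drop k (S @ [c])) = w" by simp
      hence "take (length w) (drop k S) = w" using le by simp
      thus "k \<in> occs S w" using le by (simp add: occs_def)
    qed
  qed
  thus ?thesis by (simp add: occ_occs)
qed

lemma occ_self_le: "occ S S \<le> 2"
proof -
  have "occs S S \<subseteq> {0}" by (auto simp: occs_def)
  hence "card (occs S S) \<le> card {0::nat}" by (intro card_mono) auto
  hence "card (occs S S) \<le> 1" by simp
  thus ?thesis by (simp add: occ_occs)
qed




lemma occ_drop: "occ S v \<le> occ S (drop k v)"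
  using occ_sub[of S "take k v" "drop k v" "[]"] by simp

lemma is_suf_drop: "is_suf L v \<Longrightarrow> is_suf L (drop k v)"
proof -
  assume a: "is_suf L v"
  hence le: "length v \<le> length L" and d: "drop (length L - length v) L = v" by (auto simp: is_suf_def)
  have e0: "drop k (drop (length L - length v) L) = drop (k + (length L - length v)) L" by (rule drop_drop)
  have e: "drop k v = drop (k + (length L - length v)) L" using e0 unfolding d .
  show ?thesis
  proof (cases "k \<le> length v")
    case True
    hence "k + (length L - length v) = length L - (length v - k)" using le by linarith
    thus ?thesis using e le by (simp add: is_suf_def)
  next
    case False
    thus ?thesis using e le by (simp add: is_suf_def)
  qed
qed

lemma main:
  fixes S u :: "'a list"
  assumes occ1: "occ S u \<ge> 1" and ne: "u \<noteq> []"
  shows "((unique_in S u \<and> (\<forall>x w y. u = x @ w @ y \<and> length w < length u \<longrightarrow> repeating_in S w)) \<and>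
          \<not> (unique_in (S @ [c]) u \<and> (\<forall>x w y. u = x @ w @ y \<and> length w < length u \<longrightarrow> repeating_in (S @ [c]) w)))
     \<longleftrightarrow> (u = sqs (S @ [c]) \<and> occ (S @ [c]) (sqs (S @ [c])) = 2)"
proof -
  define S' where "S' = S @ [c]"
  define P where "P l \<longleftrightarrow> l \<le> length S' \<and> occ S' (drop (length S' - l) S') \<le> 2" for l
  define L where "L = (LEAST l. P l)"
  have sqs_eq: "sqs S' = drop (length S' - L) S'" by (simp add: sqs_def L_def P_def)
  have PS: "P (length S')" using occ_self_le[of S'] by (simp add: P_def)
  have PL: "P L" unfolding L_def by (rule LeastI[of P, OF PS])
  have Lmin: "\<And>l. l < L \<Longrightarrow> \<not> P l" unfolding L_def using not_less_Least by blast
  have mono: "occ S w \<le> occ S' w" for w by (simp add: S'_def occ_snoc)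
  have sufdrop: "is_suf S' (drop (length S' - l) S')" for l by (auto simp: is_suf_def)
  show ?thesis
  proof
    assume H: "(unique_in S u \<and> (\<forall>x w y. u = x @ w @ y \<and> length w < length u \<longrightarrow> repeating_in S w)) \<and>
          \<not> (unique_in (S @ [c]) u \<and> (\<forall>x w y. u = x @ w @ y \<and> length w < length u \<longrightarrow> repeating_in (S @ [c]) w))"
    have u1: "occ S u = 1" using H by (simp add: unique_in_def)
    have rep: "\<And>x w y. u = x @ w @ y \<Longrightarrow> length w < length u \<Longrightarrow> occ S w \<ge> 2"
      using H unfolding repeating_in_def by blast
    have "\<not> occ S' u = 1"
    proof
      assume "occ S' u = 1"
      moreover have "\<forall>x w y. u = x @ w @ y \<and> length w < length u \<longrightarrow> repeating_in S' w"
      proof (intro allI impI)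
        fix x w y assume "u = x @ w @ y \<and> length w < length u"
        hence "2 \<le> occ S w" using rep by blast
        thus "repeating_in S' w" using mono[of w] by (simp add: repeating_in_def)
      qed
      ultimately show False using H unfolding S'_def unique_in_def by blast
    qed
    hence us: "is_suf S' u" and u2: "occ S' u = 2"
      using u1 by (auto simp: S'_def occ_snoc split: if_splits)
    have ulen: "length u \<le> length S'" and udrop: "drop (length S' - length u) S' = u"
      using us by (auto simp: is_suf_def)
    have Pu: "P (length u)" using ulen udrop u2 by (simp add: P_def)
    define v where "v = tl u"
    have uv: "u = [hd u] @ v @ []" using ne by (simp add: v_def)
    have v2: "occ S v \<ge> 2" using rep[OF uv] ne by (simp add: v_def)
    have vs: "is_suf S' v" using is_suf_drop[OF us, of 1] by (simp add: v_def drop_Suc)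
    have v3: "occ S' v \<ge> 3" using v2 vs by (simp add: S'_def occ_snoc)
    have notP: "\<not> P l" if "l < length u" for l
    proof -
      have "drop (length u - l) u = drop (length u - l + (length S' - length u)) S'"
        using drop_drop[of "length u - l" "length S' - length u" S'] unfolding udrop .
      moreover have "length u - l + (length S' - length u) = length S' - l" using ulen that by linarith
      ultimately have "drop (length S' - l) S' = drop (length u - l) u" by simp
      also have "\<dots> = drop (length u - l - 1) v"
      proof -
        have "length u - l = Suc (length u - l - 1)" using that by simp
        hence "drop (length u - l) u = drop (Suc (length u - l - 1)) u" by simp
        also have "\<dots> = drop (length u - l - 1) (tl u)" by (simp only: drop_Suc)
        finally show ?thesis by (simp add: v_def)
      qed
      finally have "occ S' (drop (length S' - l) S') \<ge> 3"
        using occ_drop[of S' v "length u - l - 1"] v3 by simp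
      thus ?thesis by (simp add: P_def)
    qed
    have "L = length u"
      unfolding L_def by (rule Least_equality[of P, OF Pu]) (use notP not_le in blast)
    hence "sqs S' = u" using sqs_eq udrop by simp
    thus "u = sqs (S @ [c]) \<and> occ (S @ [c]) (sqs (S @ [c])) = 2" using u2 by (simp add: S'_def)
  next
    assume H: "u = sqs (S @ [c]) \<and> occ (S @ [c]) (sqs (S @ [c])) = 2"
    have usq: "u = drop (length S' - L) S'" and u2: "occ S' u = 2"
      using H sqs_eq by (auto simp: S'_def)
    have Lle: "L \<le> length S'" using PL by (simp add: P_def)
    have ulen: "length u = L" using usq Lle by simp
    have us: "is_suf S' u" using usq sufdrop by simp
    have u1: "occ S u = 1" using u2 us by (simp add: S'_def occ_snoc)
    have rep: "occ S w \<ge> 2" if w: "u = x @ w @ y" "length w < length u" for x w y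
    proof (cases x)
      case Nil
      have "y \<noteq> []" using w Nil by auto
      then obtain y' a where y: "y = y' @ [a]" using rev_exhaust by blast
      have "2 \<le> occ S (w @ y')"
        using occ_snoc_butlast[of S c "w @ y'" a] u2 w Nil y by (simp add: S'_def)
      thus ?thesis using occ_sub[of S "[]" w y'] by simp
    next
      case (Cons a x')
      define v where "v = tl u"
      have v: "v = x' @ w @ y" using w Cons by (simp add: v_def)
      have L0: "L > 0" using ne ulen by auto
      have "\<not> P (L - 1)" using Lmin L0 by simp
      moreover have "drop (length S' - (L - 1)) S' = v"
      proof -
        have "length S' - (L - 1) = Suc (length S' - L)" using L0 Lle by linarith
        hence "drop (length S' - (L - 1)) S' = drop (length S' - L) (tl S')" by (simp only: drop_Suc)
        also have "\<dots> = tl (drop (length S' - L) S')" by (simp add: drop_tl)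
        finally show ?thesis using usq by (simp add: v_def)
      qed
      ultimately have "occ S' v \<ge> 3" using Lle unfolding P_def by auto
      moreover have "is_suf S' v" using is_suf_drop[OF us, of 1] by (simp add: v_def drop_Suc)
      ultimately have "occ S v \<ge> 2" by (simp add: S'_def occ_snoc)
      thus ?thesis using occ_sub[of S x' w y] v by simp
    qed
    have "unique_in S u" using u1 by (simp add: unique_in_def)
    moreover have "\<not> unique_in S' u" using u2 by (simp add: unique_in_def)
    ultimately show "(unique_in S u \<and> (\<forall>x w y. u = x @ w @ y \<and> length w < length u \<longrightarrow> repeating_in S w)) \<and>
          \<not> (unique_in (S @ [c]) u \<and> (\<forall>x w y. u = x @ w @ y \<and> length w < length u \<longrightarrow> repeating_in (S @ [c]) w))"
      using rep by (auto simp: S'_def repeating_in_def)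
  qed
qed


theorem lemma3:
  fixes T :: "'a list" and n i j s t :: nat
  assumes "length T = n" and "1 \<le> i" and "i \<le> j" and "j < n"
    and "i \<le> s" and "s < t" and "t \<le> j"
  shows "((s, t) \<in> MUS T i j \<and> (s, t) \<notin> MUS T i (j + 1)) \<longleftrightarrow>
         (substr T s t = sqs (substr T i (j + 1)) \<and>
          occ (substr T i (j + 1)) (sqs (substr T i (j + 1))) = 2)"
proof -
  define S where "S = substr T i j"
  define u where "u = substr T s t"
  have snoc: "substr T i (j + 1) = S @ [T ! j]"
  proof -
    have "j + 1 - (i - 1) = Suc (j + 1 - i)" using assms by simp
    moreover have "j + 1 - i < length (drop (i - 1) T)" using assms by simp
    moreover have "drop (i - 1) T ! (j + 1 - i) = T ! j" using assms by simp
    ultimately show ?thesis using assms by (simp add: S_def substr_def take_Suc_conv_app_nth)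
  qed
  have lenS: "length S = j + 1 - i" using assms by (simp add: S_def substr_def)
  have lenu: "length u = t + 1 - s" using assms by (simp add: u_def substr_def)
  have uin: "take (length u) (drop (s - i) S) = u"
  proof -
    have a: "s - i + (i - 1) = s - 1" using assms by simp
    have b: "min (t + 1 - s) (j + 1 - i - (s - i)) = t + 1 - s" using assms by simp
    have c: "Suc t - s \<le> length T - (s - Suc 0)" "Suc t - s \<le> Suc j - (i + (s - i))" using assms by auto
    show ?thesis using a b c by (simp add: S_def u_def substr_def lenu drop_take min_def del: take_drop)
  qed
  have "s - i \<in> occs S u" using uin lenS lenu assms by (simp add: occs_def)
  hence occ1: "occ S u \<ge> 1" using occs_finite[of S u] card_0_eq by (fastforce simp: occ_occs)
  have ne: "u \<noteq> []" using lenu assms by auto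
  have m1: "(s, t) \<in> MUS T i j \<longleftrightarrow> (unique_in S u \<and> (\<forall>x w y. u = x @ w @ y \<and> length w < length u \<longrightarrow> repeating_in S w))"
    using assms by (simp add: MUS_def S_def u_def)
  have m2: "(s, t) \<in> MUS T i (j + 1) \<longleftrightarrow> (unique_in (S @ [T ! j]) u \<and> (\<forall>x w y. u = x @ w @ y \<and> length w < length u \<longrightarrow> repeating_in (S @ [T ! j]) w))"
    using assms by (simp add: MUS_def snoc[symmetric] u_def)
  show ?thesis unfolding m1 m2 snoc u_def[symmetric] by (rule main[OF occ1 ne])
qed

end
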